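(* Let $\bar x$ be a sparsest solution of problem (P), and let $\tilde X$ be an optimal solution of the QBP program for some $\lambda\ge0$. Suppose that: - $\operatorname{rank}(\tilde X)=1$; - $B$ is $(\epsilon,2\|\tilde X\|_0)$-RIP-1 for some $\epsilon<1$. Then $\tilde X=\begin{bmatrix}1\\ \bar x\end{bmatrix}\begin{bmatrix}1 & \bar x^H\end{bmatrix}$.
   Context: Fix integers $n,N\ge 1$ and data $a_i\in\mathbb{C}$, $b_i,c_i\in\mathbb{C}^n$, $Q_i\in\mathbb{C}^{n\times n}$, $y_i\in\mathbb{C}$ for $i=1,\dots,N$. Problem (P) is $$\min_{x\in\mathbb{C}^n}\|x\|_0\quad\text{subject to}\quad y_i=a_i+b_i^H x+x^H c_i+x^H Q_i x,\quad i=1,\dots,N.$$ Here $\|\cdot\|_0$ counts nonzero entries of a vector or matrix, and ${}^H$ denotes conjugate transpose. Let $\Phi_i=\begin{bmatrix} a_i & b_i^H\\ c_i & Q_i\end{bmatrix}\in\mathbb{C}^{(n+1)\times(n+1)}$. Define the linear operator $B:\mathbb{C}^{(n+1)\times(n+1)}\to\mathbb{C}^N$ by $B(X)=(\operatorname{tr}(\Phi_i X))_{i=1}^N$. The QBP program with parameter $\lambda\ge0$ is $$\min_{X}\ \operatorname{tr}(X)+\lambda\|X\|_1\quad\text{subject to}\quad y_i=\operatorname{tr}(\Phi_i X)\ (i=1,\dots,N),\quad X_{1,1}=1,\quad X\succeq0,$$ where $X$ ranges over Hermitian $(n+1)\times(n+1)$ matrices and $\|\cdot\|_1$ is the sum of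 absolute values of the entries of a vector or matrix. $B$ is called $(\epsilon,k)$-RIP-1 if $\left|\frac{\|B(X)\|_1}{\|X\|_1}-1\right|<\epsilon$ for every nonzero $X$ with $\|X\|_0\le k$. *)

theory Defs
  imports "Jordan_Normal_Form.DL_Rank" "Jordan_Normal_Form.Conjugate"
begin

(* The (n+1)x(n+1) matrices use index 0 for the leading "1" slot, so that
   Phi_i = [[a_i, b_i^H],[c_i, Q_i]] has entry (0,0) = a_i, (0,k+1) = conj(b_i k),
   (j+1,0) = c_i j, (j+1,k+1) = Q_i (j,k). *)

definition mtrace :: "complex mat \<Rightarrow> complex" where
  "mtrace X = (\<Sum>j<dim_row X. X $$ (j, j))"

definition vnorm0 :: "complex vec \<Rightarrow> nat" where
  "vnorm0 x = card {j. j < dim_vec x \<and> x $ j \<noteq> 0}"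

definition mnorm0 :: "complex mat \<Rightarrow> nat" where
  "mnorm0 X = card {(j, k). j < dim_row X \<and> k < dim_col X \<and> X $$ (j, k) \<noteq> 0}"

definition mnorm1 :: "complex mat \<Rightarrow> real" where
  "mnorm1 X = (\<Sum>j<dim_row X. \<Sum>k<dim_col X. cmod (X $$ (j, k)))"

definition hermitian_mat :: "complex mat \<Rightarrow> bool" where
  "hermitian_mat X \<longleftrightarrow> dim_row X = dim_col X \<and>
     (\<forall>j < dim_row X. \<forall>k < dim_col X. X $$ (j, k) = cnj (X $$ (k, j)))"

definition psd_mat :: "complex mat \<Rightarrow> bool" where
  "psd_mat X \<longleftrightarrow> hermitian_mat X \<and>
     (\<forall>v \<in> carrier_vec (dim_row X). Re (conjugate v \<bullet> (X *\<^sub>v v)) \<ge> 0)"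

definition Phi :: "nat \<Rightarrow> complex \<Rightarrow> complex vec \<Rightarrow> complex vec \<Rightarrow> complex mat \<Rightarrow> complex mat" where
  "Phi n a b c Q = mat (n+1) (n+1) (\<lambda>(j, k).
      if j = 0 \<and> k = 0 then a
      else if j = 0 then cnj (b $ (k - 1))
      else if k = 0 then c $ (j - 1)
      else Q $$ (j - 1, k - 1))"

definition Bnorm1 :: "nat \<Rightarrow> nat \<Rightarrow> (nat \<Rightarrow> complex) \<Rightarrow> (nat \<Rightarrow> complex vec) \<Rightarrow> (nat \<Rightarrow> complex vec)
    \<Rightarrow> (nat \<Rightarrow> complex mat) \<Rightarrow> complex mat \<Rightarrow> real" where
  "Bnorm1 n N a b c Q X = (\<Sum>i<N. cmod (mtrace (Phi n (a i) (b i) (c i) (Q i) * X)))"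

definition RIP1 :: "nat \<Rightarrow> nat \<Rightarrow> (nat \<Rightarrow> complex) \<Rightarrow> (nat \<Rightarrow> complex vec) \<Rightarrow> (nat \<Rightarrow> complex vec)
    \<Rightarrow> (nat \<Rightarrow> complex mat) \<Rightarrow> real \<Rightarrow> nat \<Rightarrow> bool" where
  "RIP1 n N a b c Q eps k \<longleftrightarrow>
     (\<forall>X \<in> carrier_mat (n+1) (n+1). X \<noteq> 0\<^sub>m (n+1) (n+1) \<and> mnorm0 X \<le> k \<longrightarrow>
        \<bar>Bnorm1 n N a b c Q X / mnorm1 X - 1\<bar> < eps)"

definition P_feasible :: "nat \<Rightarrow> nat \<Rightarrow> (nat \<Rightarrow> complex) \<Rightarrow> (nat \<Rightarrow> complex vec) \<Rightarrow> (nat \<Rightarrow> complex vec)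
    \<Rightarrow> (nat \<Rightarrow> complex mat) \<Rightarrow> (nat \<Rightarrow> complex) \<Rightarrow> complex vec \<Rightarrow> bool" where
  "P_feasible n N a b c Q y x \<longleftrightarrow> x \<in> carrier_vec n \<and>
     (\<forall>i<N. y i = a i + conjugate (b i) \<bullet> x + conjugate x \<bullet> c i + conjugate x \<bullet> (Q i *\<^sub>v x))"

definition sparsest_solution :: "nat \<Rightarrow> nat \<Rightarrow> (nat \<Rightarrow> complex) \<Rightarrow> (nat \<Rightarrow> complex vec) \<Rightarrow> (nat \<Rightarrow> complex vec)
    \<Rightarrow> (nat \<Rightarrow> complex mat) \<Rightarrow> (nat \<Rightarrow> complex) \<Rightarrow> complex vec \<Rightarrow> bool" where
  "sparsest_solution n N a b c Q y x \<longleftrightarrow> P_feasible n N a b c Q y x \<and>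
     (\<forall>z. P_feasible n N a b c Q y z \<longrightarrow> vnorm0 x \<le> vnorm0 z)"

definition QBP_feasible :: "nat \<Rightarrow> nat \<Rightarrow> (nat \<Rightarrow> complex) \<Rightarrow> (nat \<Rightarrow> complex vec) \<Rightarrow> (nat \<Rightarrow> complex vec)
    \<Rightarrow> (nat \<Rightarrow> complex mat) \<Rightarrow> (nat \<Rightarrow> complex) \<Rightarrow> complex mat \<Rightarrow> bool" where
  "QBP_feasible n N a b c Q y X \<longleftrightarrow> X \<in> carrier_mat (n+1) (n+1) \<and> hermitian_mat X \<and>
     (\<forall>i<N. y i = mtrace (Phi n (a i) (b i) (c i) (Q i) * X)) \<and> X $$ (0, 0) = 1 \<and> psd_mat X"

(* objective tr(X) + lambda ||X||_1; tr(X) is real for Hermitian X *)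
definition QBP_obj :: "real \<Rightarrow> complex mat \<Rightarrow> real" where
  "QBP_obj lam X = Re (mtrace X) + lam * mnorm1 X"

definition QBP_optimal :: "nat \<Rightarrow> nat \<Rightarrow> (nat \<Rightarrow> complex) \<Rightarrow> (nat \<Rightarrow> complex vec) \<Rightarrow> (nat \<Rightarrow> complex vec)
    \<Rightarrow> (nat \<Rightarrow> complex mat) \<Rightarrow> (nat \<Rightarrow> complex) \<Rightarrow> real \<Rightarrow> complex mat \<Rightarrow> bool" where
  "QBP_optimal n N a b c Q y lam X \<longleftrightarrow> QBP_feasible n N a b c Q y X \<and>
     (\<forall>Z. QBP_feasible n N a b c Q y Z \<longrightarrow> QBP_obj lam X \<le> QBP_obj lam Z)"

definition lift_mat :: "complex vec \<Rightarrow> complex mat" where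
  "lift_mat x = (let v = vCons 1 x in
     mat (dim_vec v) (dim_vec v) (\<lambda>(j, k). v $ j * cnj (v $ k)))"

end

theory Submission imports Defs begin

lemma lift_carrier: "x \<in> carrier_vec n \<Longrightarrow> lift_mat x \<in> carrier_mat (n+1) (n+1)"
  unfolding lift_mat_def Let_def by auto

lemma lift_index: "x \<in> carrier_vec n \<Longrightarrow> j < n+1 \<Longrightarrow> k < n+1 \<Longrightarrow>
   lift_mat x $$ (j,k) = vCons 1 x $ j * cnj (vCons 1 x $ k)"
  unfolding lift_mat_def Let_def by auto

lemma trace_lift:
  assumes x: "x \<in> carrier_vec n" and b: "b \<in> carrier_vec n" and c: "c \<in> carrier_vec n"
    and Q: "Q \<in> carrier_mat n n"
  shows "mtrace (Phi n a b c Q * lift_mat x) =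
     a + conjugate b \<bullet> x + conjugate x \<bullet> c + conjugate x \<bullet> (Q *\<^sub>v x)"
proof -
  have L: "lift_mat x \<in> carrier_mat (n+1) (n+1)" using lift_carrier[OF x] .
  have "mtrace (Phi n a b c Q * lift_mat x) =
     (\<Sum>j<n+1. \<Sum>k<n+1. Phi n a b c Q $$ (j,k) * (vCons 1 x $ k * cnj (vCons 1 x $ j)))"
  proof -
    have "\<And>j. j < n+1 \<Longrightarrow> (Phi n a b c Q * lift_mat x) $$ (j,j) =
        (\<Sum>k<n+1. Phi n a b c Q $$ (j,k) * (vCons 1 x $ k * cnj (vCons 1 x $ j)))"
    proof -
      fix j assume j: "j < n+1"
      have "(Phi n a b c Q * lift_mat x) $$ (j,j) = row (Phi n a b c Q) j \<bullet> col (lift_mat x) j"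
        using j L by (simp add: Phi_def)
      also have "\<dots> = (\<Sum>k\<in>{0..<n+1}. Phi n a b c Q $$ (j,k) * (vCons 1 x $ k * cnj (vCons 1 x $ j)))"
        unfolding scalar_prod_def using j L by (intro sum.cong) (auto simp: Phi_def lift_index[OF x])
      finally show "?thesis j" by (simp add: atLeast0LessThan)
    qed
    moreover have "dim_row (Phi n a b c Q * lift_mat x) = n+1" by (simp add: Phi_def)
    ultimately show ?thesis unfolding mtrace_def by (intro sum.cong) auto
  qed
  also have "\<dots> = a + (\<Sum>k<n. cnj (b $ k) * x $ k) + (\<Sum>j<n. c $ j * cnj (x $ j))
       + (\<Sum>j<n. \<Sum>k<n. Q $$ (j,k) * x $ k * cnj (x $ j))"
    by (simp del: sum.lessThan_Suc add: sum.lessThan_Suc_shift Phi_def sum.distrib algebra_simps)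
  also have "\<dots> = a + conjugate b \<bullet> x + conjugate x \<bullet> c + conjugate x \<bullet> (Q *\<^sub>v x)"
    using x b c Q
    by (simp add: scalar_prod_def sum_distrib_left algebra_simps atLeast0LessThan)
  finally show ?thesis .
qed


lemma (in vec_space) rank1_multiple:
  assumes A: "A \<in> carrier_mat n nc" and r: "rank A = 1"
    and u: "u \<in> set (cols A)" "u \<noteq> 0\<^sub>v n" and w: "w \<in> set (cols A)"
  shows "\<exists>\<alpha>. w = \<alpha> \<cdot>\<^sub>v u"
proof (rule ccontr)
  assume nm: "\<nexists>\<alpha>. w = \<alpha> \<cdot>\<^sub>v u"
  have cu: "u \<in> carrier_vec n" "w \<in> carrier_vec n" using u w A cols_dim by blast+
  have li0: "lin_indpt {}"
    by (metis (no_types) empty_subsetI fin_dim finite_basis_exists subset_li_is_li vec_vs vectorspace.basis_def)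
  have "u \<notin> span {}" using span_empty u by auto
  hence li1: "lin_indpt ({} \<union> {u})" using lin_dep_iff_in_span[of "{}" u] li0 cu by auto
  have wu: "w \<noteq> u" using nm by (metis cu(1) one_smult_vec)
  have "w \<notin> span {u}"
  proof
    assume "w \<in> span {u}"
    then obtain a where "lincomb a {u} = w" using finite_in_span[of "{u}" w] cu by auto
    hence "w = a u \<cdot>\<^sub>v u" unfolding lincomb_def using cu by auto
    thus False using nm by blast
  qed
  hence li2: "lin_indpt ({u} \<union> {w})" using lin_dep_iff_in_span[of "{u}" w] li1 cu wu by auto
  have "card ({u} \<union> {w}) \<le> rank A"
    by (rule rank_ge_card_indpt[OF A]) (use u w li2 in auto)
  thus False using wu r by auto
qed

lemma col_in_cols: "k < dim_col X \<Longrightarrow> col X k \<in> set (cols X)"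
  by (metis cols_length cols_nth nth_mem)

lemma rank1_lift:
  fixes X :: "complex mat"
  assumes X: "X \<in> carrier_mat (n+1) (n+1)" and h: "hermitian_mat X" and x00: "X $$ (0,0) = 1"
    and r: "vec_space.rank (n+1) X = 1"
  shows "X = lift_mat (vec n (\<lambda>j. X $$ (Suc j, 0)))"
proof -
  define xt where "xt = vec n (\<lambda>j. X $$ (Suc j, 0))"
  have vx: "\<And>j. j < n+1 \<Longrightarrow> vCons 1 xt $ j = X $$ (j, 0)"
    proof -
    fix j assume j: "j < n+1"
    show "vCons 1 xt $ j = X $$ (j, 0)"
    proof (cases j)
      case 0 thus ?thesis by (simp add: x00)
    next
      case (Suc i) thus ?thesis using j by (simp add: xt_def)
    qed
  qed
  have c0: "col X 0 \<in> set (cols X)" using X by (intro col_in_cols) auto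
  have nz: "col X 0 \<noteq> 0\<^sub>v (n+1)"
  proof
    assume "col X 0 = 0\<^sub>v (n+1)"
    hence "col X 0 $ 0 = 0" by simp
    thus False using X x00 by simp
  qed
  have ent: "X $$ (j,k) = X $$ (j,0) * cnj (X $$ (k,0))" if j: "j < n+1" and k: "k < n+1" for j k
  proof -
    have "col X k \<in> set (cols X)" using X k by (intro col_in_cols) auto
    then obtain \<alpha> where al: "col X k = \<alpha> \<cdot>\<^sub>v col X 0"
      using vec_space.rank1_multiple[OF X r c0 nz] by blast
    have e: "\<And>i. i < n+1 \<Longrightarrow> X $$ (i,k) = \<alpha> * X $$ (i,0)"
    proof -
      fix i assume i: "i < n+1"
      have "col X k $ i = (\<alpha> \<cdot>\<^sub>v col X 0) $ i" using al by simp
      thus "X $$ (i,k) = \<alpha> * X $$ (i,0)" using i k X by simp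
    qed
    have "\<alpha> = X $$ (0,k)" using e[of 0] x00 by simp
    also have "\<dots> = cnj (X $$ (k,0))" proof -
      have "\<forall>j < dim_row X. \<forall>k < dim_col X. X $$ (j, k) = cnj (X $$ (k, j))"
        using h unfolding hermitian_mat_def by blast
      moreover have "0 < dim_row X" "k < dim_col X" using X k by auto
      ultimately show ?thesis by blast
    qed
    finally show ?thesis using e[OF j] by simp
  qed
  show ?thesis
    unfolding xt_def[symmetric]
  proof (rule eq_matI)
    fix j k assume j: "j < dim_row (lift_mat xt)" and k: "k < dim_col (lift_mat xt)"
    have d: "xt \<in> carrier_vec n" by (simp add: xt_def)
    have jk: "j < n+1" "k < n+1" using j k lift_carrier[OF d] by auto
    show "X $$ (j,k) = lift_mat xt $$ (j,k)"
      unfolding lift_index[OF d jk] vx[OF jk(1)] vx[OF jk(2)] by (rule ent[OF jk])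
  qed (use X lift_carrier[of xt n] in \<open>auto simp: xt_def\<close>)
qed


lemma mnorm0_lift:
  assumes x: "x \<in> carrier_vec n"
  shows "mnorm0 (lift_mat x) = (1 + vnorm0 x)^2"
proof -
  define S where "S = {j. j < n+1 \<and> vCons 1 x $ j \<noteq> 0}"
  have "{(j, k). j < dim_row (lift_mat x) \<and> k < dim_col (lift_mat x) \<and> lift_mat x $$ (j, k) \<noteq> 0} = S \<times> S"
    using lift_carrier[OF x] by (auto simp: S_def lift_index[OF x])
  hence "mnorm0 (lift_mat x) = card S * card S" unfolding mnorm0_def by (simp add: card_cartesian_product)
  moreover have "S = insert 0 (Suc ` {j. j < dim_vec x \<and> x $ j \<noteq> 0})"
    using x by (auto simp: S_def less_Suc_eq_0_disj)
  hence "card S = 1 + vnorm0 x" unfolding vnorm0_def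
    by (simp add: card_image)
  ultimately show ?thesis by (simp add: power2_eq_square)
qed

lemma mnorm0_diff:
  assumes A: "A \<in> carrier_mat m m" and B: "B \<in> carrier_mat m m"
  shows "mnorm0 (A - B) \<le> mnorm0 A + mnorm0 B"
proof -
  let ?S = "\<lambda>M. {(j, k). j < m \<and> k < m \<and> M $$ (j, k) \<noteq> 0}"
  have e: "\<And>M. M \<in> carrier_mat m m \<Longrightarrow> mnorm0 M = card (?S M)" unfolding mnorm0_def by auto
  have f: "\<And>M. finite (?S M)"
    by (rule finite_subset[of _ "{..<m} \<times> {..<m}"]) auto
  have "?S (A - B) \<subseteq> ?S A \<union> ?S B" using A B by auto
  hence "card (?S (A - B)) \<le> card (?S A \<union> ?S B)" by (intro card_mono) (use f in auto)
  also have "\<dots> \<le> card (?S A) + card (?S B)" by (rule card_Un_le)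
  finally have c: "card (?S (A - B)) \<le> card (?S A) + card (?S B)" .
  have "A - B \<in> carrier_mat m m" using B by (rule minus_carrier_mat)
  thus ?thesis using e[of "A - B"] e[of A] e[of B] A B c by simp
qed

lemma mtrace_diff:
  assumes P: "P \<in> carrier_mat m m" and A: "A \<in> carrier_mat m m" and B: "B \<in> carrier_mat m m"
  shows "mtrace (P * (A - B)) = mtrace (P * A) - mtrace (P * B)"
proof -
  have "P * (A - B) = P * A - P * B" using mult_minus_distrib_mat[OF P A B] .
  thus ?thesis unfolding mtrace_def using P A B by (simp add: sum_subtractf)
qed


theorem mainTheorem4:
  fixes n N :: nat
    and a :: "nat \<Rightarrow> complex" and b c :: "nat \<Rightarrow> complex vec"
    and Q :: "nat \<Rightarrow> complex mat" and y :: "nat \<Rightarrow> complex"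
    and xbar :: "complex vec" and Xt :: "complex mat" and lam :: real
  assumes "n \<ge> 1" and "N \<ge> 1"
    and "\<forall>i<N. b i \<in> carrier_vec n \<and> c i \<in> carrier_vec n \<and> Q i \<in> carrier_mat n n"
    and "sparsest_solution n N a b c Q y xbar"
    and "lam \<ge> 0"
    and "QBP_optimal n N a b c Q y lam Xt"
    and "vec_space.rank (n+1) Xt = 1"
    and "\<exists>eps<1. RIP1 n N a b c Q eps (2 * mnorm0 Xt)"
  shows "Xt = lift_mat xbar"
proof -
  note dims = assms(3)
  have feas: "QBP_feasible n N a b c Q y Xt" using assms(6) unfolding QBP_optimal_def by blast
  have X: "Xt \<in> carrier_mat (n+1) (n+1)" and h: "hermitian_mat Xt" and x00: "Xt $$ (0,0) = 1"
    and tr: "\<forall>i<N. y i = mtrace (Phi n (a i) (b i) (c i) (Q i) * Xt)"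
    using feas unfolding QBP_feasible_def by blast+
  define xt where "xt = vec n (\<lambda>j. Xt $$ (Suc j, 0))"
  have xtc: "xt \<in> carrier_vec n" by (simp add: xt_def)
  have Xl: "Xt = lift_mat xt" unfolding xt_def by (rule rank1_lift[OF X h x00 assms(7)])
  have "P_feasible n N a b c Q y xt"
    unfolding P_feasible_def using xtc tr dims trace_lift[OF xtc] Xl by auto
  have xb: "P_feasible n N a b c Q y xbar" and sp: "vnorm0 xbar \<le> vnorm0 xt"
    using assms(4) \<open>P_feasible n N a b c Q y xt\<close> unfolding sparsest_solution_def by blast+
  have xbc: "xbar \<in> carrier_vec n" using xb unfolding P_feasible_def by blast
  have trb: "\<forall>i<N. y i = mtrace (Phi n (a i) (b i) (c i) (Q i) * lift_mat xbar)"
    using xb dims trace_lift[OF xbc] unfolding P_feasible_def by auto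
  have Lb: "lift_mat xbar \<in> carrier_mat (n+1) (n+1)" by (rule lift_carrier[OF xbc])
  have "mnorm0 (lift_mat xbar) \<le> mnorm0 Xt"
    unfolding Xl mnorm0_lift[OF xbc] mnorm0_lift[OF xtc] using sp by (simp add: power_mono)
  define D where "D = Xt - lift_mat xbar"
  have Dc: "D \<in> carrier_mat (n+1) (n+1)" unfolding D_def using Lb by (rule minus_carrier_mat)
  have D0: "mnorm0 D \<le> 2 * mnorm0 Xt"
    using mnorm0_diff[OF X Lb] \<open>mnorm0 (lift_mat xbar) \<le> mnorm0 Xt\<close> unfolding D_def by linarith
  have PC: "Phi n (a i) (b i) (c i) (Q i) \<in> carrier_mat (n+1) (n+1)" for i
    by (simp add: Phi_def)
  have BD: "Bnorm1 n N a b c Q D = 0"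
    unfolding Bnorm1_def D_def
    using tr trb mtrace_diff[OF PC X Lb] by (intro sum.neutral) auto
  obtain eps where eps: "eps < 1" "RIP1 n N a b c Q eps (2 * mnorm0 Xt)" using assms(8) by blast
  have "D = 0\<^sub>m (n+1) (n+1)"
  proof (rule ccontr)
    assume "D \<noteq> 0\<^sub>m (n+1) (n+1)"
    hence "\<bar>Bnorm1 n N a b c Q D / mnorm1 D - 1\<bar> < eps"
      using eps(2) Dc D0 unfolding RIP1_def by blast
    thus False using BD eps(1) by simp
  qed
  show ?thesis
  proof (rule eq_matI)
    fix j k assume j: "j < dim_row (lift_mat xbar)" and k: "k < dim_col (lift_mat xbar)"
    have "D $$ (j,k) = 0" using \<open>D = 0\<^sub>m (n+1) (n+1)\<close> j k Lb by simp
    thus "Xt $$ (j,k) = lift_mat xbar $$ (j,k)" unfolding D_def using j k Lb X by simp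
  qed (use X Lb in auto)
qed

end
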